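(* Let $X$ be an $n$-valued group and $x\in X$. (a) If $S^*(x,r)=\emptyset$ for some $r\in\mathbb{N}$, then $S^*(x,r')=\emptyset$ for every $r'>r$. (b) If $r_1,\dots,r_k\in\mathbb{N}$ are such that $S^*(x,r_i)\ne\emptyset$ for all $i$, then $$S^*(x,r_1+\dots+r_k)\subseteq \operatorname{Set}\bigl(S^*(x,r_1)*\dots*S^*(x,r_k)\bigr).$$
   Context: An $n$-valued group is a set $X$ with an associative $n$-valued multiplication $*:X\times X\to\operatorname{Sym}^nX$ (values are $n$-multi-sets), with a unit $e$ ($e*x=x*e=[x,\dots,x]$) and an inverse map; multiplication is extended to multi-sets (in particular to finite subsets, regarded as multi-sets) elementwise with multiplicities. For a multi-set $M$, $\operatorname{Set}(M)$ is the set of distinct elements of $M$. $x^{*r}=x*x*\dots*x$ ($r$ factors). Define $B^*(x,0)=S^*(x,0)=\emptyset$ and for $r\in\mathbb{N}$: $B^*(x,r)=\bigcup_{i=1}^r\operatorname{Set}(x^{*i})$ and $S^*(x,r)=B^*(x,r)\setminus B^*(x,r-1)$. *)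

theory Defs
  imports Main "HOL-Library.Multiset"
begin

text \<open>An n-valued multiplication is modelled as mul :: 'a => 'a => 'a multiset
  (values are multisets of size n); the carrier X is the whole type 'a.\<close>

definition mmul :: "('a \<Rightarrow> 'a \<Rightarrow> 'a multiset) \<Rightarrow> 'a multiset \<Rightarrow> 'a multiset \<Rightarrow> 'a multiset" where
  "mmul mul M N = (\<Sum>x\<in>#M. \<Sum>y\<in>#N. mul x y)"

definition n_valued_group ::
  "nat \<Rightarrow> ('a \<Rightarrow> 'a \<Rightarrow> 'a multiset) \<Rightarrow> 'a \<Rightarrow> ('a \<Rightarrow> 'a) \<Rightarrow> bool" where
  "n_valued_group n mul e ginv \<longleftrightarrow>
     n \<ge> 1 \<and>
     (\<forall>x y. size (mul x y) = n) \<and>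
     (\<forall>x y z. mmul mul (mul x y) {#z#} = mmul mul {#x#} (mul y z)) \<and>
     (\<forall>x. mul e x = replicate_mset n x \<and> mul x e = replicate_mset n x) \<and>
     (\<forall>x. e \<in># mul (ginv x) x \<and> e \<in># mul x (ginv x))"

text \<open>x^{*r}: mpow x 1 = [x], mpow x (r+1) = mpow x r * x (only used for r >= 1).\<close>
fun mpow :: "('a \<Rightarrow> 'a \<Rightarrow> 'a multiset) \<Rightarrow> 'a \<Rightarrow> nat \<Rightarrow> 'a multiset" where
  "mpow mul x 0 = {#}"
| "mpow mul x (Suc 0) = {#x#}"
| "mpow mul x (Suc (Suc r)) = mmul mul (mpow mul x (Suc r)) {#x#}"

definition Bstar :: "('a \<Rightarrow> 'a \<Rightarrow> 'a multiset) \<Rightarrow> 'a \<Rightarrow> nat \<Rightarrow> 'a set" where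
  "Bstar mul x r = (\<Union>i\<in>{1..r}. set_mset (mpow mul x i))"

definition Sstar :: "('a \<Rightarrow> 'a \<Rightarrow> 'a multiset) \<Rightarrow> 'a \<Rightarrow> nat \<Rightarrow> 'a set" where
  "Sstar mul x r = (if r = 0 then {} else Bstar mul x r - Bstar mul x (r - 1))"

fun mlist_prod :: "('a \<Rightarrow> 'a \<Rightarrow> 'a multiset) \<Rightarrow> 'a multiset list \<Rightarrow> 'a multiset" where
  "mlist_prod mul [] = {#}"
| "mlist_prod mul (M # Ms) = foldl (mmul mul) M Ms"

end

theory Submission
  imports Defs
begin

lemma in_mmul: "z \<in># mmul mul M N \<longleftrightarrow> (\<exists>a\<in>#M. \<exists>b\<in>#N. z \<in># mul a b)"
  unfolding mmul_def by (induction M) auto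

lemma mpow_Suc: "r \<ge> 1 \<Longrightarrow> mpow mul x (Suc r) = mmul mul (mpow mul x r) {#x#}"
  by (cases r) auto

lemma in_mpow_Suc: "r \<ge> 1 \<Longrightarrow> z \<in># mpow mul x (Suc r) \<longleftrightarrow> (\<exists>w\<in>#mpow mul x r. z \<in># mul w x)"
  by (simp add: mpow_Suc in_mmul)

lemma in_Bstar: "z \<in> Bstar mul x r \<longleftrightarrow> (\<exists>i. 1 \<le> i \<and> i \<le> r \<and> z \<in># mpow mul x i)"
  unfolding Bstar_def by auto

lemma Sstar_iff: "z \<in> Sstar mul x r \<longleftrightarrow> r \<ge> 1 \<and> z \<in># mpow mul x r \<and> (\<forall>j. 1 \<le> j \<longrightarrow> j < r \<longrightarrow> z \<notin># mpow mul x j)"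
proof (cases "r = 0")
  case True then show ?thesis by (simp add: Sstar_def)
next
  case False
  have "z \<in> Sstar mul x r \<longleftrightarrow> (\<exists>i. 1 \<le> i \<and> i \<le> r \<and> z \<in># mpow mul x i) \<and> \<not> (\<exists>i. 1 \<le> i \<and> i \<le> r - 1 \<and> z \<in># mpow mul x i)"
    using False by (simp add: Sstar_def in_Bstar)
  also have "\<dots> \<longleftrightarrow> r \<ge> 1 \<and> z \<in># mpow mul x r \<and> (\<forall>j. 1 \<le> j \<longrightarrow> j < r \<longrightarrow> z \<notin># mpow mul x j)"
    using False by (metis Suc_pred' le_neq_implies_less less_Suc_eq_le not_gr_zero not_less order_refl One_nat_def Suc_leI)
  finally show ?thesis .
qed

lemma assoc_set:
  assumes "n_valued_group n mul e ginv"
  shows "z \<in># mmul mul (mul u v) {#w#} \<longleftrightarrow> z \<in># mmul mul {#u#} (mul v w)"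
proof -
  have "\<forall>x y z. mmul mul (mul x y) {#z#} = mmul mul {#x#} (mul y z)"
    using assms unfolding n_valued_group_def by blast
  then show ?thesis by simp
qed

lemma mpow_add:
  assumes G: "n_valued_group n mul e ginv" and a: "a \<ge> 1" and b: "b \<ge> 1"
  shows "z \<in># mpow mul x (a + b) \<longleftrightarrow> (\<exists>u\<in>#mpow mul x a. \<exists>v\<in>#mpow mul x b. z \<in># mul u v)"
  using b
proof (induction b arbitrary: z rule: nat_induct_at_least)
  case base
  then show ?case using a by (simp add: in_mpow_Suc)
next
  case (Suc b)
  have "z \<in># mpow mul x (a + Suc b) \<longleftrightarrow> (\<exists>w\<in>#mpow mul x (a+b). z \<in># mul w x)"
    using a by (simp add: in_mpow_Suc)
  also have "\<dots> \<longleftrightarrow> (\<exists>u\<in>#mpow mul x a. \<exists>v\<in>#mpow mul x b. \<exists>w\<in>#mul u v. z \<in># mul w x)"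
    using Suc.IH by blast
  also have "\<dots> \<longleftrightarrow> (\<exists>u\<in>#mpow mul x a. \<exists>v\<in>#mpow mul x b. \<exists>t\<in>#mul v x. z \<in># mul u t)"
  proof -
    have "\<And>u v. (\<exists>w\<in>#mul u v. z \<in># mul w x) \<longleftrightarrow> (\<exists>t\<in>#mul v x. z \<in># mul u t)"
      using assoc_set[OF G] by (simp add: in_mmul)
    then show ?thesis by blast
  qed
  also have "\<dots> \<longleftrightarrow> (\<exists>u\<in>#mpow mul x a. \<exists>t\<in>#mpow mul x (Suc b). z \<in># mul u t)"
  proof -
    have "\<And>t. t \<in># mpow mul x (Suc b) \<longleftrightarrow> (\<exists>v\<in>#mpow mul x b. t \<in># mul v x)"
      using Suc.hyps in_mpow_Suc by metis
    then show ?thesis by blast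
  qed
  finally show ?case .
qed

lemma partA_step:
  assumes "r \<ge> 1" "Sstar mul x r = {}"
  shows "Sstar mul x (Suc r) = {}"
proof (rule ccontr)
  assume "Sstar mul x (Suc r) \<noteq> {}"
  then obtain z where z: "z \<in> Sstar mul x (Suc r)" by blast
  then have "z \<in># mpow mul x (Suc r)" by (simp add: Sstar_iff)
  then obtain w where w: "w \<in># mpow mul x r" "z \<in># mul w x" using assms(1) in_mpow_Suc by metis
  have "w \<notin> Sstar mul x r" using assms(2) by blast
  then obtain j where j: "1 \<le> j" "j < r" "w \<in># mpow mul x j" using w assms(1) by (auto simp: Sstar_iff)
  then have "z \<in># mpow mul x (Suc j)" using w in_mpow_Suc by metis
  then show False using z j by (auto simp: Sstar_iff)
qed

lemma partA_aux:
  assumes "r \<ge> 1" "Sstar mul x r = {}"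
  shows "Sstar mul x (r + k) = {}"
proof (induction k)
  case 0 then show ?case using assms by simp
next
  case (Suc k) then show ?case using partA_step[of "r + k" mul x] assms(1) by simp
qed

lemma partA:
  assumes "r \<ge> 1" "Sstar mul x r = {}" "r < r'"
  shows "Sstar mul x r' = {}"
  using partA_aux[OF assms(1,2), of "r' - r"] assms(3) by simp

lemma mlist_prod_snoc:
  "Ms \<noteq> [] \<Longrightarrow> mlist_prod mul (Ms @ [M]) = mmul mul (mlist_prod mul Ms) M"
  by (cases Ms) auto

lemma partB:
  assumes G: "n_valued_group n mul e ginv"
  shows "rs \<noteq> [] \<Longrightarrow> (\<forall>r\<in>set rs. r \<ge> 1) \<Longrightarrow>
         Sstar mul x (sum_list rs)
           \<subseteq> set_mset (mlist_prod mul (map (\<lambda>r. mset_set (Sstar mul x r)) rs))"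
proof (induction rs rule: rev_induct)
  case Nil then show ?case by simp
next
  case (snoc r rs)
  show ?case
  proof (cases "rs = []")
    case True
    have "finite (Sstar mul x r)" unfolding Sstar_def Bstar_def by auto
    then show ?thesis using True by simp
  next
    case False
    define a where "a = sum_list rs"
    have r1: "r \<ge> 1" using snoc.prems by simp
    have a1: "a \<ge> 1"
    proof -
      obtain b bs where "rs = b # bs" using False by (cases rs) auto
      then show ?thesis using snoc.prems by (simp add: a_def)
    qed
    have IH: "Sstar mul x a \<subseteq> set_mset (mlist_prod mul (map (\<lambda>r. mset_set (Sstar mul x r)) rs))"
      using snoc False unfolding a_def by simp
    have fin: "finite (Sstar mul x r)" unfolding Sstar_def Bstar_def by auto
    show ?thesis
    proof
      fix z assume z: "z \<in> Sstar mul x (sum_list (rs @ [r]))"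
      then have zS: "z \<in> Sstar mul x (a + r)" by (simp add: a_def)
      then have "z \<in># mpow mul x (a + r)" by (simp add: Sstar_iff)
      then obtain u v where uv: "u \<in># mpow mul x a" "v \<in># mpow mul x r" "z \<in># mul u v"
        using mpow_add[OF G a1 r1] by blast
      have uS: "u \<in> Sstar mul x a"
      proof -
        { fix j assume j: "1 \<le> j" "j < a" "u \<in># mpow mul x j"
          then have "z \<in># mpow mul x (j + r)" using mpow_add[OF G j(1) r1] uv by blast
          then have False using zS j by (auto simp: Sstar_iff) }
        then show ?thesis using uv a1 by (auto simp: Sstar_iff)
      qed
      have vS: "v \<in> Sstar mul x r"
      proof -
        { fix j assume j: "1 \<le> j" "j < r" "v \<in># mpow mul x j"
          then have "z \<in># mpow mul x (a + j)" using mpow_add[OF G a1 j(1)] uv by blast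
          then have False using zS j by (auto simp: Sstar_iff) }
        then show ?thesis using uv r1 by (auto simp: Sstar_iff)
      qed
      show "z \<in> set_mset (mlist_prod mul (map (\<lambda>r. mset_set (Sstar mul x r)) (rs @ [r])))"
        using False IH uS vS uv fin by (auto simp: mlist_prod_snoc in_mmul)
    qed
  qed
qed

theorem mainTheorem6:
  fixes n :: nat and mul :: "'a \<Rightarrow> 'a \<Rightarrow> 'a multiset" and e :: 'a and ginv :: "'a \<Rightarrow> 'a"
    and x :: 'a
  assumes "n_valued_group n mul e ginv"
  shows "(\<forall>r r'. r \<ge> 1 \<and> Sstar mul x r = {} \<and> r < r' \<longrightarrow> Sstar mul x r' = {})
    \<and> (\<forall>rs :: nat list. (\<forall>r\<in>set rs. Sstar mul x r \<noteq> {}) \<longrightarrow>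
         Sstar mul x (sum_list rs)
           \<subseteq> set_mset (mlist_prod mul (map (\<lambda>r. mset_set (Sstar mul x r)) rs)))"
proof (intro conjI allI impI)
  fix r r' assume "r \<ge> 1 \<and> Sstar mul x r = {} \<and> r < r'"
  then show "Sstar mul x r' = {}" using partA[of r mul x r'] by auto
next
  fix rs :: "nat list" assume h: "\<forall>r\<in>set rs. Sstar mul x r \<noteq> {}"
  then have h1: "\<forall>r\<in>set rs. r \<ge> 1" by (metis Sstar_def less_one not_le)
  show "Sstar mul x (sum_list rs)
           \<subseteq> set_mset (mlist_prod mul (map (\<lambda>r. mset_set (Sstar mul x r)) rs))"
  proof (cases "rs = []")
    case True then show ?thesis by (simp add: Sstar_def)
  next
    case False then show ?thesis using partB[OF assms] h1 by blast
  qed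
qed

end
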